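(* Assume the bipartite graph $\mathcal{T}$ is a tree of diameter $3$. There is a constant $m_5$ with the following property. Fix $T>0$ and let measurable locally bounded $(\psi,y,z,w)$ on $[0,T]$ satisfy $$\text{(S1)}\ \sum_{j\in\mathcal{J}}(\psi_{ij}+\mu_{ij}\mathfrak{J}\psi_{ij})=w_i-y_i-\theta_i\mathfrak{J}y_i,\ i\in\mathcal{I};\quad \text{(S2)}\ \sum_{i\in\mathcal{I}}\psi_{ij}=-z_j,\ j\in\mathcal{J};\quad \text{(S3)}\ y_i,z_j\ge0;\quad \text{(S4)}\ \min(e\cdot y,e\cdot z)=0$$ on $[0,T]$ (with $\psi_{ij}=0$ for $i\not\sim j$). Let bounded measurable functions $f_i\ge0$, $i\in\mathcal{I}$, be given. Then there exist $(\hat\psi,\hat y,\hat z,\hat w)$ defined on $[0,T]$ satisfying (S1)–(S4) on $[0,T]$, such that $e\cdot\hat y\ge e\cdot y$, $e\cdot\hat z\le e\cdot z$, and $\hat w_i=w_i+f_i+\eta_i$ for $i\in\mathcal{I}$, where each $\eta_i$ is nondecreasing and continuous with $0\le\eta_i\le m_5T\sum_{i'\in\mathcal{I}}|f_{i'}|_T^*$ on $[0,T]$. The constant $m_5$ does not depend on $T$, $f_i$, $\psi,y,z,w$.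
   Context: $\mathcal{I}=\{1,\dots,I\}$, $\mathcal{J}=\{I+1,\dots,I+J\}$, $\mathcal{E}\subset\mathcal{I}\times\mathcal{J}$, $i\sim j$ iff $(i,j)\in\mathcal{E}$; $\mathcal{T}$ is the bipartite graph with vertices $\mathcal{I}\cup\mathcal{J}$ and edges $\mathcal{E}$. Constants $\mu_{ij}>0$ for $(i,j)\in\mathcal{E}$, $\mu_{ij}=0$ otherwise, $\theta_i\ge0$. $\mathfrak{J}f(t)=\int_0^tf(s)ds$, $|f|_T^*=\sup_{0\le s\le T}|f(s)|$, $e=(1,\dots,1)'$. *)

theory Defs
  imports "HOL-Analysis.Analysis"
begin

definition adj :: "(nat \<times> nat) set \<Rightarrow> nat \<Rightarrow> nat \<Rightarrow> bool" where
  "adj E u v \<longleftrightarrow> (u, v) \<in> E \<or> (v, u) \<in> E"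

definition walk :: "(nat \<times> nat) set \<Rightarrow> nat list \<Rightarrow> bool" where
  "walk E xs \<longleftrightarrow> xs \<noteq> [] \<and> (\<forall>k. Suc k < length xs \<longrightarrow> adj E (xs ! k) (xs ! Suc k))"

definition graph_connected :: "nat set \<Rightarrow> (nat \<times> nat) set \<Rightarrow> bool" where
  "graph_connected V E \<longleftrightarrow>
     (\<forall>u\<in>V. \<forall>v\<in>V. \<exists>xs. walk E xs \<and> hd xs = u \<and> last xs = v)"

definition has_cycle :: "(nat \<times> nat) set \<Rightarrow> bool" where
  "has_cycle E \<longleftrightarrow>
     (\<exists>xs. 3 \<le> length xs \<and> distinct xs \<and> walk E xs \<and> adj E (last xs) (hd xs))"

definition is_tree :: "nat set \<Rightarrow> (nat \<times> nat) set \<Rightarrow> bool" where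
  "is_tree V E \<longleftrightarrow> finite V \<and> V \<noteq> {} \<and> E \<subseteq> V \<times> V \<and>
     graph_connected V E \<and> \<not> has_cycle E"

definition graph_dist :: "(nat \<times> nat) set \<Rightarrow> nat \<Rightarrow> nat \<Rightarrow> nat" where
  "graph_dist E u v =
     (LEAST n. \<exists>xs. walk E xs \<and> hd xs = u \<and> last xs = v \<and> length xs = Suc n)"

definition diameter :: "nat set \<Rightarrow> (nat \<times> nat) set \<Rightarrow> nat" where
  "diameter V E = Max {graph_dist E u v | u v. u \<in> V \<and> v \<in> V}"

abbreviation Iset :: "nat \<Rightarrow> nat set" where "Iset nI \<equiv> {1..nI}"
abbreviation Jset :: "nat \<Rightarrow> nat \<Rightarrow> nat set" where "Jset nI nJ \<equiv> {nI+1..nI+nJ}"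

definition regular_on :: "real \<Rightarrow> (real \<Rightarrow> real) \<Rightarrow> bool" where
  "regular_on T f \<longleftrightarrow> f \<in> borel_measurable (restrict_space lborel {0..T}) \<and> bounded (f ` {0..T})"

definition Jint :: "(real \<Rightarrow> real) \<Rightarrow> real \<Rightarrow> real" where
  "Jint f t = integral {0..t} f"

definition sup_norm :: "real \<Rightarrow> (real \<Rightarrow> real) \<Rightarrow> real" where
  "sup_norm T f = Sup ((\<lambda>s. \<bar>f s\<bar>) ` {0..T})"

definition admissible ::
  "nat \<Rightarrow> nat \<Rightarrow> (nat \<times> nat) set \<Rightarrow> (nat \<Rightarrow> nat \<Rightarrow> real) \<Rightarrow> (nat \<Rightarrow> real) \<Rightarrow> real \<Rightarrow>
   (nat \<Rightarrow> nat \<Rightarrow> real \<Rightarrow> real) \<Rightarrow> (nat \<Rightarrow> real \<Rightarrow> real) \<Rightarrow> (nat \<Rightarrow> real \<Rightarrow> real) \<Rightarrow>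
   (nat \<Rightarrow> real \<Rightarrow> real) \<Rightarrow> bool" where
  "admissible nI nJ E \<mu> \<theta> T \<psi> y z w \<longleftrightarrow>
     (\<forall>i\<in>Iset nI. \<forall>j\<in>Jset nI nJ. regular_on T (\<psi> i j)) \<and>
     (\<forall>i\<in>Iset nI. regular_on T (y i) \<and> regular_on T (w i)) \<and>
     (\<forall>j\<in>Jset nI nJ. regular_on T (z j)) \<and>
     (\<forall>t\<in>{0..T}.
        (\<forall>i\<in>Iset nI. \<forall>j\<in>Jset nI nJ. (i, j) \<notin> E \<longrightarrow> \<psi> i j t = 0) \<and>
        (\<forall>i\<in>Iset nI. (\<Sum>j\<in>Jset nI nJ. \<psi> i j t + \<mu> i j * Jint (\<psi> i j) t)
                        = w i t - y i t - \<theta> i * Jint (y i) t) \<and>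
        (\<forall>j\<in>Jset nI nJ. (\<Sum>i\<in>Iset nI. \<psi> i j t) = - z j t) \<and>
        (\<forall>i\<in>Iset nI. 0 \<le> y i t) \<and> (\<forall>j\<in>Jset nI nJ. 0 \<le> z j t) \<and>
        min (\<Sum>i\<in>Iset nI. y i t) (\<Sum>j\<in>Jset nI nJ. z j t) = 0)"

end

theory Submission
  imports Defs
begin


lemma adj_sides:
  assumes "E \<subseteq> Iset nI \<times> Jset nI nJ" "adj E a b"
  shows "(a \<in> Iset nI \<and> b \<in> Jset nI nJ \<and> (a,b) \<in> E) \<or> (b \<in> Iset nI \<and> a \<in> Jset nI nJ \<and> (b,a) \<in> E)"
  using assms by (auto simp: adj_def)

lemma walk_single[simp]: "walk E [a]"
  by (simp add: walk_def)

lemma walk_Cons2[simp]: "walk E (a # b # xs) \<longleftrightarrow> adj E a b \<and> walk E (b # xs)"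
proof
  assume h: "walk E (a # b # xs)"
  then have "adj E ((a # b # xs) ! 0) ((a # b # xs) ! Suc 0)" unfolding walk_def by (metis length_Cons zero_less_Suc Suc_less_eq)
  then have "adj E a b" by simp
  moreover have "walk E (b # xs)" unfolding walk_def
  proof (intro conjI allI impI)
    fix k assume "Suc k < length (b # xs)"
    then have "Suc (Suc k) < length (a # b # xs)" by simp
    with h have "adj E ((a # b # xs) ! Suc k) ((a # b # xs) ! Suc (Suc k))" unfolding walk_def by blast
    then show "adj E ((b # xs) ! k) ((b # xs) ! Suc k)" by simp
  qed simp
  ultimately show "adj E a b \<and> walk E (b # xs)" by blast
next
  assume h: "adj E a b \<and> walk E (b # xs)"
  show "walk E (a # b # xs)" unfolding walk_def
  proof (intro conjI allI impI)
    fix k assume k: "Suc k < length (a # b # xs)"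
    show "adj E ((a # b # xs) ! k) ((a # b # xs) ! Suc k)"
    proof (cases k)
      case 0 then show ?thesis using h by simp
    next
      case (Suc k')
      then have "Suc k' < length (b # xs)" using k by simp
      with h have "adj E ((b # xs) ! k') ((b # xs) ! Suc k')" unfolding walk_def by blast
      then show ?thesis using Suc by simp
    qed
  qed simp
qed

lemma dist_ex:
  assumes "graph_connected V E" "u \<in> V" "v \<in> V"
  shows "\<exists>xs. walk E xs \<and> hd xs = u \<and> last xs = v \<and> length xs = Suc (graph_dist E u v)"
proof -
  obtain xs where xs: "walk E xs" "hd xs = u" "last xs = v"
    using assms unfolding graph_connected_def by blast
  then have "xs \<noteq> []" unfolding walk_def by blast
  then have "\<exists>ys. walk E ys \<and> hd ys = u \<and> last ys = v \<and> length ys = Suc (length xs - 1)"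
    using xs by (intro exI[of _ xs]) auto
  then show ?thesis unfolding graph_dist_def by (rule LeastI_ex[where P = "\<lambda>n. \<exists>xs. walk E xs \<and> hd xs = u \<and> last xs = v \<and> length xs = Suc n", OF exI])
qed

lemma dist_le:
  assumes "walk E xs" "hd xs = u" "last xs = v"
  shows "graph_dist E u v \<le> length xs - 1"
proof -
  have "xs \<noteq> []" using assms unfolding walk_def by blast
  then have "\<exists>ys. walk E ys \<and> hd ys = u \<and> last ys = v \<and> length ys = Suc (length xs - 1)"
    using assms by (intro exI[of _ xs]) auto
  then show ?thesis unfolding graph_dist_def by (rule Least_le)
qed

lemma cn:
  assumes sub: "E \<subseteq> Iset nI \<times> Jset nI nJ" and w: "walk E xs" and len: "length xs \<le> 4"
    and ab: "hd xs = a" "last xs = b" "a \<noteq> b"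
    and side: "(a \<in> Iset nI \<and> b \<in> Iset nI) \<or> (a \<in> Jset nI nJ \<and> b \<in> Jset nI nJ)"
  shows "\<exists>m. adj E a m \<and> adj E m b"
proof -
  have ne: "xs \<noteq> []" using w unfolding walk_def by blast
  then obtain x0 r where xs: "xs = x0 # r" by (cases xs) auto
  show ?thesis
  proof (cases r)
    case Nil then show ?thesis using xs ab by simp
  next
    case (Cons x1 r2)
    show ?thesis
    proof (cases r2)
      case Nil
      then have "adj E a b" using xs Cons w ab by simp
      then show ?thesis using adj_sides[OF sub, of a b] side by auto
    next
      case (Cons x2 r3)
      note Cons2 = this
      show ?thesis
      proof (cases r3)
        case Nil
        then show ?thesis using xs \<open>r = x1 # r2\<close> Cons2 w ab by auto
      next
        case (Cons x3 r4)
        then have "r4 = []" using len xs \<open>r = x1 # r2\<close> Cons2 by simp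
        then have "adj E a x1" "adj E x1 x2" "adj E x2 b"
          using xs \<open>r = x1 # r2\<close> Cons2 Cons w ab by auto
        then show ?thesis
          using adj_sides[OF sub, of a x1] adj_sides[OF sub, of x1 x2] adj_sides[OF sub, of x2 b] side
          by auto
      qed
    qed
  qed
qed


lemma key:
  assumes sub: "E \<subseteq> Iset nI \<times> Jset nI nJ"
    and nc: "\<not> has_cycle E"
    and CN: "\<And>a b. a \<noteq> b \<Longrightarrow> (a \<in> Iset nI \<and> b \<in> Iset nI) \<or> (a \<in> Jset nI nJ \<and> b \<in> Jset nI nJ)
              \<Longrightarrow> \<exists>m. adj E a m \<and> adj E m b"
    and e1: "(i0, u) \<in> E" and e2: "(i0, j0) \<in> E" and e3: "(v, j0) \<in> E" and ne: "(v, u) \<notin> E"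
  shows "\<forall>j\<in>Jset nI nJ. (i0, j) \<in> E"
proof -
  have S: "i0 \<in> Iset nI" "u \<in> Jset nI nJ" "j0 \<in> Jset nI nJ" "v \<in> Iset nI"
    using sub e1 e2 e3 by auto
  have A: "i = i0" if iu: "(i, u) \<in> E" for i
  proof (rule ccontr)
    assume ii0: "i \<noteq> i0"
    have iI: "i \<in> Iset nI" using iu sub by auto
    have iv: "i \<noteq> v" using iu ne by auto
    obtain j2 where j2: "adj E i j2" "adj E j2 v" using CN[OF iv] iI S by blast
    have j2e: "(i, j2) \<in> E" "(v, j2) \<in> E" "j2 \<in> Jset nI nJ"
      using adj_sides[OF sub j2(1)] adj_sides[OF sub j2(2)] iI S by auto
    have uj0: "u \<noteq> j0" using ne e3 by auto
    have vi0: "v \<noteq> i0" using ne e1 by auto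
    have uj2: "u \<noteq> j2" using ne j2e by auto
    show False
    proof (cases "j2 = j0")
      case True
      have "has_cycle E" unfolding has_cycle_def
        apply (rule exI[of _ "[i, u, i0, j0]"])
        using iu e1 e2 j2e True ii0 uj0 iI S by (auto simp: adj_def)
      then show False using nc by blast
    next
      case False
      have "has_cycle E" unfolding has_cycle_def
        apply (rule exI[of _ "[u, i, j2, v, j0, i0]"])
        using iu e1 e2 e3 j2e False ii0 uj0 iv vi0 uj2 iI S by (auto simp: adj_def)
      then show False using nc by blast
    qed
  qed
  show ?thesis
  proof
    fix j assume jJ: "j \<in> Jset nI nJ"
    show "(i0, j) \<in> E"
    proof (cases "j = u")
      case True then show ?thesis using e1 by simp
    next
      case False
      obtain m where m: "adj E j m" "adj E m u" using CN[OF False] jJ S by blast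
      have "(m, u) \<in> E" "(m, j) \<in> E"
        using adj_sides[OF sub m(1)] adj_sides[OF sub m(2)] jJ S by auto
      then show ?thesis using A by auto
    qed
  qed
qed

lemma double_star:
  assumes sub: "E \<subseteq> Iset nI \<times> Jset nI nJ"
    and tree: "is_tree (Iset nI \<union> Jset nI nJ) E"
    and diam: "diameter (Iset nI \<union> Jset nI nJ) E = 3"
  shows "\<exists>i0\<in>Iset nI. \<forall>j\<in>Jset nI nJ. (i0, j) \<in> E"
    and "Jset nI nJ \<noteq> {}"
    and "\<forall>i\<in>Iset nI. \<exists>j\<in>Jset nI nJ. (i, j) \<in> E"
proof -
  let ?V = "Iset nI \<union> Jset nI nJ"
  have fin: "finite ?V" and Vne: "?V \<noteq> {}" and conn: "graph_connected ?V E" and nc: "\<not> has_cycle E"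
    using tree unfolding is_tree_def by auto
  let ?S = "{graph_dist E u v | u v. u \<in> ?V \<and> v \<in> ?V}"
  have Seq0: "\<And>V. {graph_dist E u v | u v. u \<in> V \<and> v \<in> V} = (\<lambda>(u,v). graph_dist E u v) ` (V \<times> V)" by auto
  have Seq: "?S = (\<lambda>(u,v). graph_dist E u v) ` (?V \<times> ?V)" by (rule Seq0)
  have Sfin: "finite ?S" unfolding Seq using fin by simp
  have Sne: "?S \<noteq> {}" using Vne by auto
  have "Max ?S = 3" using diam unfolding diameter_def .
  then have "3 \<in> ?S" using Max_in[OF Sfin Sne] by simp
  then obtain u v where uv: "u \<in> ?V" "v \<in> ?V" "graph_dist E u v = 3" by auto
  have dle: "graph_dist E a b \<le> 3" if "a \<in> ?V" "b \<in> ?V" for a b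
    using Max_ge[OF Sfin, of "graph_dist E a b"] that \<open>Max ?S = 3\<close> by auto
  have CN: "\<exists>m. adj E a m \<and> adj E m b"
    if "a \<noteq> b" "(a \<in> Iset nI \<and> b \<in> Iset nI) \<or> (a \<in> Jset nI nJ \<and> b \<in> Jset nI nJ)" for a b
  proof -
    have V: "a \<in> ?V" "b \<in> ?V" using that by auto
    obtain xs where xs: "walk E xs" "hd xs = a" "last xs = b" "length xs = Suc (graph_dist E a b)"
      using dist_ex[OF conn V] by blast
    have "length xs \<le> 4" using xs(4) dle[OF V] by simp
    then show ?thesis using cn[OF sub xs(1) _ xs(2,3) that] by blast
  qed
  obtain xs where xs: "walk E xs" "hd xs = u" "last xs = v" "length xs = 4"
    using dist_ex[OF conn uv(1,2)] uv(3) by auto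
  then obtain a1 a2 where xs4: "xs = [u, a1, a2, v]"
    by (cases xs; cases "tl xs"; cases "tl (tl xs)"; cases "tl (tl (tl xs))"; auto)
  have nadj: "\<not> adj E u v"
  proof
    assume "adj E u v"
    then have "walk E [u, v]" by simp
    from dist_le[OF this, of u v] uv(3) show False by simp
  qed
  have w: "adj E u a1" "adj E a1 a2" "adj E a2 v" using xs(1) xs4 by auto
  show "\<exists>i0\<in>Iset nI. \<forall>j\<in>Jset nI nJ. (i0, j) \<in> E"
  proof (cases "u \<in> Jset nI nJ")
    case True
    have e: "(a1, u) \<in> E" "(a1, a2) \<in> E" "(v, a2) \<in> E" "(v, u) \<notin> E" "a1 \<in> Iset nI"
      using adj_sides[OF sub w(1)] adj_sides[OF sub w(2)] adj_sides[OF sub w(3)] True nadj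
      by (auto simp: adj_def)
    show ?thesis using key[OF sub nc CN e(1-4)] e(5) by blast
  next
    case False
    then have uI: "u \<in> Iset nI" using uv by auto
    have e: "(a2, v) \<in> E" "(a2, a1) \<in> E" "(u, a1) \<in> E" "(u, v) \<notin> E" "a2 \<in> Iset nI"
      using adj_sides[OF sub w(1)] adj_sides[OF sub w(2)] adj_sides[OF sub w(3)] uI nadj
      by (auto simp: adj_def)
    show ?thesis using key[OF sub nc CN e(1-4)] e(5) by blast
  qed
  then obtain i0 where i0: "i0 \<in> Iset nI" "\<forall>j\<in>Jset nI nJ. (i0, j) \<in> E" by blast
  have "u \<noteq> v" using uv(3) dist_le[of E "[u]" u u] by auto
  then have "E \<noteq> {}" using nadj xs w by (auto simp: adj_def)
  then show Jne: "Jset nI nJ \<noteq> {}" using sub by auto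
  show "\<forall>i\<in>Iset nI. \<exists>j\<in>Jset nI nJ. (i, j) \<in> E"
  proof
    fix i assume iI: "i \<in> Iset nI"
    obtain j where jJ: "j \<in> Jset nI nJ" using Jne by blast
    have V: "i \<in> ?V" "j \<in> ?V" using iI jJ by auto
    obtain ys where ys: "walk E ys" "hd ys = i" "last ys = j"
      using conn V unfolding graph_connected_def by blast
    have "i \<noteq> j" using iI jJ by auto
    then obtain y0 y1 r where "ys = y0 # y1 # r"
      using ys by (cases ys; cases "tl ys"; auto simp: walk_def)
    then have "adj E i y1" using ys by auto
    then show "\<exists>j\<in>Jset nI nJ. (i, j) \<in> E" using adj_sides[OF sub, of i y1] iI by auto
  qed
qed



lemma reg_meas_leb:
  assumes "regular_on T f" shows "f \<in> borel_measurable (lebesgue_on {0..T})"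
proof -
  have "f \<in> borel_measurable (restrict_space lborel {0..T})" using assms unfolding regular_on_def by blast
  then show ?thesis
    by (metis borel_measurable_subalgebra eucl_ivals(5) mono_restrict_space
    sets_completionI_sets sets_lborel space_restrict_space2 subsetI)
qed

lemma reg_boundE:
  assumes "regular_on T f" obtains M where "\<And>t. t \<in> {0..T} \<Longrightarrow> \<bar>f t\<bar> \<le> M"
proof -
  have "bounded (f ` {0..T})" using assms unfolding regular_on_def by blast
  then obtain M where "\<forall>x\<in>f ` {0..T}. norm x \<le> M" unfolding bounded_iff by blast
  then have "\<And>t. t\<in>{0..T} \<Longrightarrow> \<bar>f t\<bar> \<le> M" by auto
  then show ?thesis by (rule that)
qed

lemma reg_intro:
  assumes "f \<in> borel_measurable (restrict_space lborel {0..T})" "\<And>t. t \<in> {0..T} \<Longrightarrow> \<bar>f t\<bar> \<le> M"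
  shows "regular_on T f"
  unfolding regular_on_def
proof
  show "bounded (f ` {0..T})" unfolding bounded_iff using assms(2) by (auto intro!: exI[of _ M])
qed (use assms in auto)

lemma reg_measI: "regular_on T f \<Longrightarrow> f \<in> borel_measurable (restrict_space lborel {0..T})"
  unfolding regular_on_def by blast

lemma reg_int:
  assumes "regular_on T f" "t \<le> T" shows "f integrable_on {0..t}"
proof -
  obtain M where M: "\<And>t. t \<in> {0..T} \<Longrightarrow> \<bar>f t\<bar> \<le> M" using reg_boundE[OF assms(1)] by blast
  have "f integrable_on {0..T}"
    by (rule measurable_bounded_by_integrable_imp_integrable_real[OF reg_meas_leb[OF assms(1)], of "\<lambda>_. M"])
       (use M in auto)
  then show ?thesis by (rule integrable_on_subinterval) (use assms in auto)
qed

lemma reg_add: "regular_on T f \<Longrightarrow> regular_on T g \<Longrightarrow> regular_on T (\<lambda>t. f t + g t)"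
proof -
  assume a: "regular_on T f" "regular_on T g"
  obtain M1 where M1: "\<And>t. t \<in> {0..T} \<Longrightarrow> \<bar>f t\<bar> \<le> M1" using reg_boundE[OF a(1)] by blast
  obtain M2 where M2: "\<And>t. t \<in> {0..T} \<Longrightarrow> \<bar>g t\<bar> \<le> M2" using reg_boundE[OF a(2)] by blast
  show ?thesis
    by (rule reg_intro[where M="M1+M2"]) (use a M1 M2 reg_measI in \<open>auto intro!: borel_measurable_add simp: abs_triangle_ineq[THEN order_trans] add_mono\<close>)
qed

lemma reg_diff: "regular_on T f \<Longrightarrow> regular_on T g \<Longrightarrow> regular_on T (\<lambda>t. f t - g t)"
proof -
  assume a: "regular_on T f" "regular_on T g"
  obtain M1 where M1: "\<And>t. t \<in> {0..T} \<Longrightarrow> \<bar>f t\<bar> \<le> M1" using reg_boundE[OF a(1)] by blast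
  obtain M2 where M2: "\<And>t. t \<in> {0..T} \<Longrightarrow> \<bar>g t\<bar> \<le> M2" using reg_boundE[OF a(2)] by blast
  have "\<bar>f t - g t\<bar> \<le> M1 + M2" if "t \<in> {0..T}" for t
    using M1[OF that] M2[OF that] by linarith
  then show ?thesis
    by (intro reg_intro[where M="M1+M2"]) (use a reg_measI in \<open>auto intro!: borel_measurable_diff\<close>)
qed

lemma reg_const: "regular_on T (\<lambda>t. c)"
  by (rule reg_intro[where M="\<bar>c\<bar>"]) auto

lemma reg_mult: "regular_on T f \<Longrightarrow> regular_on T g \<Longrightarrow> regular_on T (\<lambda>t. f t * g t)"
proof -
  assume a: "regular_on T f" "regular_on T g"
  obtain M1 where M1: "\<And>t. t \<in> {0..T} \<Longrightarrow> \<bar>f t\<bar> \<le> M1" using reg_boundE[OF a(1)] by blast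
  obtain M2 where M2: "\<And>t. t \<in> {0..T} \<Longrightarrow> \<bar>g t\<bar> \<le> M2" using reg_boundE[OF a(2)] by blast
  have "\<bar>f t * g t\<bar> \<le> M1 * M2" if "t \<in> {0..T}" for t
    unfolding abs_mult by (rule mult_mono) (use M1[OF that] M2[OF that] in auto)
  then show ?thesis
    by (intro reg_intro[where M="M1*M2"]) (use a reg_measI in \<open>auto intro!: borel_measurable_times\<close>)
qed

lemma reg_sum: "finite A \<Longrightarrow> (\<And>a. a \<in> A \<Longrightarrow> regular_on T (g a)) \<Longrightarrow> regular_on T (\<lambda>t. \<Sum>a\<in>A. g a t)"
proof (induction A rule: finite_induct)
  case empty then show ?case using reg_const[of T 0] by simp
next
  case (insert x F)
  then show ?case using reg_add[of T "g x" "\<lambda>t. \<Sum>a\<in>F. g a t"] by simp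
qed

lemma reg_dom:
  assumes "f \<in> borel_measurable (restrict_space lborel {0..T})" "regular_on T g"
    "\<And>t. t \<in> {0..T} \<Longrightarrow> \<bar>f t\<bar> \<le> \<bar>g t\<bar>"
  shows "regular_on T f"
proof -
  obtain M where M: "\<And>t. t \<in> {0..T} \<Longrightarrow> \<bar>g t\<bar> \<le> M" using reg_boundE[OF assms(2)] by blast
  show ?thesis by (rule reg_intro[OF assms(1), where M=M]) (use M assms(3) in force)
qed

lemma sup_norm_ge:
  assumes "regular_on T f" "t \<in> {0..T}" shows "\<bar>f t\<bar> \<le> sup_norm T f"
proof -
  obtain M where M: "\<And>t. t \<in> {0..T} \<Longrightarrow> \<bar>f t\<bar> \<le> M" using reg_boundE[OF assms(1)] by blast
  have "bdd_above ((\<lambda>s. \<bar>f s\<bar>) ` {0..T})" using M by (auto intro!: bdd_aboveI[where M=M])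
  then show ?thesis unfolding sup_norm_def using assms(2) by (rule cSUP_upper[rotated])
qed

lemma Jint_add: "f integrable_on {0..t} \<Longrightarrow> g integrable_on {0..t} \<Longrightarrow> Jint (\<lambda>s. f s + g s) t = Jint f t + Jint g t"
  unfolding Jint_def by (rule integral_add)

lemma Jint_cmult: "Jint (\<lambda>s. c * f s) t = c * Jint f t"
  unfolding Jint_def by simp

lemma Jint_sum: "finite A \<Longrightarrow> (\<And>a. a \<in> A \<Longrightarrow> g a integrable_on {0..t}) \<Longrightarrow> Jint (\<lambda>s. \<Sum>a\<in>A. g a s) t = (\<Sum>a\<in>A. Jint (g a) t)"
  unfolding Jint_def by (rule integral_sum)

lemma Jint_cont: "regular_on T f \<Longrightarrow> continuous_on {0..T} (Jint f)"
  unfolding Jint_def[abs_def] by (rule indefinite_integral_continuous_1) (rule reg_int, auto)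

lemma Jint_mono:
  assumes "regular_on T f" "\<And>s. s \<in> {0..T} \<Longrightarrow> 0 \<le> f s"
  shows "mono_on {0..T} (Jint f)"
proof (rule mono_onI)
  fix r s assume rs: "r \<in> {0..T}" "s \<in> {0..T}" "r \<le> s"
  show "Jint f r \<le> Jint f s" unfolding Jint_def
    by (rule integral_subset_le) (use rs assms reg_int in auto)
qed

lemma Jint_nonneg:
  assumes "f integrable_on {0..t}" "\<And>s. s \<in> {0..t} \<Longrightarrow> 0 \<le> f s"
  shows "0 \<le> Jint f t"
  unfolding Jint_def by (rule integral_nonneg) (use assms in auto)

lemma Jint_le:
  assumes "regular_on T f" "t \<in> {0..T}" "\<And>s. s \<in> {0..T} \<Longrightarrow> f s \<le> K" "0 \<le> K"
  shows "Jint f t \<le> T * K"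
proof -
  have "Jint f t \<le> integral {0..t} (\<lambda>_. K)" unfolding Jint_def
    by (rule integral_le) (use assms reg_int in auto)
  also have "\<dots> = t * K" using assms(2) by simp
  also have "\<dots> \<le> T * K" using assms by (auto intro: mult_right_mono)
  finally show ?thesis .
qed



lemma ident_meas[measurable]: "(\<lambda>x::real. x) \<in> borel_measurable (restrict_space borel S)"
  by (rule measurable_restrict_space1) simp

lemma meas_step: "(\<lambda>s::real. if s \<le> \<tau> then c else (0::real)) \<in> borel_measurable (restrict_space lborel {0..T})"
  by measurable

lemma meas_P: "(\<lambda>s::real. c * min s \<tau>) \<in> borel_measurable (restrict_space lborel {0..T})"
  by measurable

lemma Jint_step:
  assumes "0 < \<tau>" "0 \<le> t"
  shows "Jint (\<lambda>s. if s \<le> \<tau> then c else 0) t = c * min t \<tau>"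
proof -
  have "((\<lambda>s. c) has_integral c * (min t \<tau> - 0)) {0..min t \<tau>}"
    using has_integral_const_real[of c 0 "min t \<tau>"] assms by (simp add: mult.commute)
  then have "((\<lambda>s. if s \<in> {0..min t \<tau>} then c else 0) has_integral c * min t \<tau>) {0..t}"
    by (subst has_integral_restrict) auto
  then have "((\<lambda>s. if s \<le> \<tau> then c else 0) has_integral c * min t \<tau>) {0..t}"
    by (rule has_integral_eq[rotated]) auto
  then show ?thesis unfolding Jint_def by (simp add: integral_unique)
qed



lemma reg_min: "regular_on T f \<Longrightarrow> regular_on T g \<Longrightarrow> regular_on T (\<lambda>t. min (f t) (g t))"
proof -
  assume a: "regular_on T f" "regular_on T g"
  obtain M1 where M1: "\<And>t. t \<in> {0..T} \<Longrightarrow> \<bar>f t\<bar> \<le> M1" using reg_boundE[OF a(1)] by blast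
  obtain M2 where M2: "\<And>t. t \<in> {0..T} \<Longrightarrow> \<bar>g t\<bar> \<le> M2" using reg_boundE[OF a(2)] by blast
  have "\<bar>min (f t) (g t)\<bar> \<le> M1 + M2" if "t \<in> {0..T}" for t
    using M1[OF that] M2[OF that] by linarith
  then show ?thesis
    by (intro reg_intro[where M="M1+M2"]) (use a reg_measI in \<open>auto intro!: borel_measurable_min\<close>)
qed

lemma reg_max: "regular_on T f \<Longrightarrow> regular_on T g \<Longrightarrow> regular_on T (\<lambda>t. max (f t) (g t))"
proof -
  assume a: "regular_on T f" "regular_on T g"
  obtain M1 where M1: "\<And>t. t \<in> {0..T} \<Longrightarrow> \<bar>f t\<bar> \<le> M1" using reg_boundE[OF a(1)] by blast
  obtain M2 where M2: "\<And>t. t \<in> {0..T} \<Longrightarrow> \<bar>g t\<bar> \<le> M2" using reg_boundE[OF a(2)] by blast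
  have "\<bar>max (f t) (g t)\<bar> \<le> M1 + M2" if "t \<in> {0..T}" for t
    using M1[OF that] M2[OF that] by linarith
  then show ?thesis
    by (intro reg_intro[where M="M1+M2"]) (use a reg_measI in \<open>auto intro!: borel_measurable_max\<close>)
qed

lemma reg_cont: "continuous_on {0..T} f \<Longrightarrow> (\<And>t. t \<in> {0..T} \<Longrightarrow> \<bar>f t\<bar> \<le> M) \<Longrightarrow> regular_on T f"
  by (rule reg_intro[where M=M]) (use borel_measurable_continuous_on_restrict measurable_cong_sets in fastforce)+

lemma alloc_facts:
  fixes f0 FL P Z :: real
  assumes "0 \<le> f0" "0 \<le> FL" "0 \<le> P" "0 \<le> Z"
  shows "0 \<le> min FL (max 0 (Z - f0 - P))" "min FL (max 0 (Z - f0 - P)) \<le> FL"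
    "0 \<le> min Z (f0 + P + FL)" "min Z (f0 + P + FL) \<le> Z" "min Z (f0 + P + FL) \<le> f0 + P + FL"
    "0 \<le> f0 + P + min FL (max 0 (Z - f0 - P)) - min Z (f0 + P + FL)"
    "min FL (max 0 (Z - f0 - P)) > 0 \<Longrightarrow> P + min FL (max 0 (Z - f0 - P)) \<le> min Z (f0 + P + FL)"
    "min Z (f0 + P + FL) < Z \<Longrightarrow> min Z (f0 + P + FL) = f0 + P + FL"
  using assms by (auto simp: min_def max_def split: if_splits)


lemma construction:
  fixes nI nJ :: nat and E :: "(nat \<times> nat) set"
    and \<mu> :: "nat \<Rightarrow> nat \<Rightarrow> real" and \<theta> :: "nat \<Rightarrow> real"
    and i0 :: nat and nb :: "nat \<Rightarrow> nat" and mmin mmax T :: real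
    and \<psi> :: "nat \<Rightarrow> nat \<Rightarrow> real \<Rightarrow> real" and y z w f :: "nat \<Rightarrow> real \<Rightarrow> real"
  assumes E_sub: "E \<subseteq> Iset nI \<times> Jset nI nJ"
    and mu_pos: "\<And>i j. (i, j) \<in> E \<Longrightarrow> \<mu> i j > 0"
    and mu_zero: "\<And>i j. (i, j) \<notin> E \<Longrightarrow> \<mu> i j = 0"
    and theta_nn: "\<And>i. i \<in> Iset nI \<Longrightarrow> \<theta> i \<ge> 0"
    and i0I: "i0 \<in> Iset nI" and i0E: "\<And>j. j \<in> Jset nI nJ \<Longrightarrow> (i0, j) \<in> E"
    and nb: "\<And>i. i \<in> Iset nI \<Longrightarrow> nb i \<in> Jset nI nJ \<and> (i, nb i) \<in> E"
    and mmin: "0 < mmin" "\<And>j. j \<in> Jset nI nJ \<Longrightarrow> mmin \<le> \<mu> i0 j"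
    and mmax: "\<And>j. j \<in> Jset nI nJ \<Longrightarrow> \<mu> i0 j \<le> mmax"
    and Jne: "Jset nI nJ \<noteq> {}"
    and Tpos: "T > 0" and adm: "admissible nI nJ E \<mu> \<theta> T \<psi> y z w"
    and fc: "\<forall>i\<in>Iset nI. regular_on T (f i) \<and> (\<forall>t\<in>{0..T}. 0 \<le> f i t)"
  defines "m5 \<equiv> (mmax + (mmax + \<theta> i0) * (1 + mmax / mmin)) + ((\<Sum>i\<in>Iset nI. \<Sum>j\<in>Jset nI nJ. \<mu> i j) + (\<Sum>i\<in>Iset nI. \<theta> i))"
  shows "\<exists>\<psi>' y' z' w' \<eta>.
        admissible nI nJ E \<mu> \<theta> T \<psi>' y' z' w' \<and>
        (\<forall>t\<in>{0..T}. (\<Sum>i\<in>Iset nI. y' i t) \<ge> (\<Sum>i\<in>Iset nI. y i t)) \<and>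
        (\<forall>t\<in>{0..T}. (\<Sum>j\<in>Jset nI nJ. z' j t) \<le> (\<Sum>j\<in>Jset nI nJ. z j t)) \<and>
        (\<forall>i\<in>Iset nI. \<forall>t\<in>{0..T}. w' i t = w i t + f i t + \<eta> i t) \<and>
        (\<forall>i\<in>Iset nI. mono_on {0..T} (\<eta> i) \<and> continuous_on {0..T} (\<eta> i) \<and>
           (\<forall>t\<in>{0..T}. 0 \<le> \<eta> i t \<and>
              \<eta> i t \<le> m5 * T * (\<Sum>i'\<in>Iset nI. sup_norm T (f i'))))"
proof -
  let ?I = "Iset nI" and ?J = "Jset nI nJ"
  define I' where "I' = ?I - {i0}"
  have finI: "finite ?I" and finJ: "finite ?J" and finI': "finite I'" by (auto simp: I'_def)
  have I_split: "?I = insert i0 I'" "i0 \<notin> I'" using i0I by (auto simp: I'_def)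
  have I'I: "\<And>i. i \<in> I' \<Longrightarrow> i \<in> ?I \<and> i \<noteq> i0" by (auto simp: I'_def)
  have freg: "\<And>i. i \<in> ?I \<Longrightarrow> regular_on T (f i)" and fnn: "\<And>i t. i \<in> ?I \<Longrightarrow> t \<in> {0..T} \<Longrightarrow> 0 \<le> f i t"
    using fc by auto
  note admD = adm[unfolded admissible_def]
  have psireg: "\<And>i j. i \<in> ?I \<Longrightarrow> j \<in> ?J \<Longrightarrow> regular_on T (\<psi> i j)"
    and yreg: "\<And>i. i \<in> ?I \<Longrightarrow> regular_on T (y i)" and wreg: "\<And>i. i \<in> ?I \<Longrightarrow> regular_on T (w i)"
    and zreg: "\<And>j. j \<in> ?J \<Longrightarrow> regular_on T (z j)"
    using admD by auto
  have S0: "\<And>t i j. t \<in> {0..T} \<Longrightarrow> i \<in> ?I \<Longrightarrow> j \<in> ?J \<Longrightarrow> (i, j) \<notin> E \<Longrightarrow> \<psi> i j t = 0"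
    and S1: "\<And>t i. t \<in> {0..T} \<Longrightarrow> i \<in> ?I \<Longrightarrow> (\<Sum>j\<in>?J. \<psi> i j t + \<mu> i j * Jint (\<psi> i j) t)
                        = w i t - y i t - \<theta> i * Jint (y i) t"
    and S2: "\<And>t j. t \<in> {0..T} \<Longrightarrow> j \<in> ?J \<Longrightarrow> (\<Sum>i\<in>?I. \<psi> i j t) = - z j t"
    and S3y: "\<And>t i. t \<in> {0..T} \<Longrightarrow> i \<in> ?I \<Longrightarrow> 0 \<le> y i t"
    and S3z: "\<And>t j. t \<in> {0..T} \<Longrightarrow> j \<in> ?J \<Longrightarrow> 0 \<le> z j t"
    and S4: "\<And>t. t \<in> {0..T} \<Longrightarrow> min (\<Sum>i\<in>?I. y i t) (\<Sum>j\<in>?J. z j t) = 0"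
    using admD by blast+
  have mmm: "mmin \<le> mmax" using Jne mmin mmax by (meson ex_in_conv order_trans)
  have mmax_pos: "0 < mmax" using mmm mmin by linarith
  have th0: "0 \<le> \<theta> i0" using theta_nn i0I by blast
  have mu_nn: "\<And>i j. 0 \<le> \<mu> i j" using mu_pos mu_zero by (metis less_eq_real_def)

  define Fs where "Fs = (\<Sum>i\<in>?I. sup_norm T (f i))"
  define c where "c = mmax * Fs"
  define \<tau> where "\<tau> = 1 / mmin"
  define k where "k = (\<lambda>s::real. if s \<le> \<tau> then c else 0)"
  define P where "P = (\<lambda>t::real. c * min t \<tau>)"
  define FL where "FL = (\<lambda>t. \<Sum>i\<in>I'. f i t)"
  define Z where "Z = (\<lambda>t. \<Sum>j\<in>?J. z j t)"
  define B where "B = (\<lambda>t. f i0 t + P t + FL t)"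
  define D where "D = (\<lambda>t. min (Z t) (B t))"
  define X where "X = (\<lambda>t. min (FL t) (max 0 (Z t - f i0 t - P t)))"
  define x where "x = (\<lambda>i t. (X t / FL t) * f i t)"
  define d where "d = (\<lambda>j t. z j t * (D t / Z t))"
  define L where "L = (\<lambda>j t. \<Sum>i\<in>{i\<in>I'. nb i = j}. x i t)"
  define \<Delta> where "\<Delta> = (\<lambda>i j t. if i = i0 then d j t - L j t else if j = nb i then x i t else 0)"
  define dy where "dy = (\<lambda>i t. if i = i0 then f i0 t + P t + X t - D t else f i t - x i t)"
  define H where "H = (\<lambda>i s. (if i = i0 then k s else 0) + (\<Sum>j\<in>?J. \<mu> i j * \<Delta> i j s) + \<theta> i * dy i s)"
  define \<eta> where "\<eta> = (\<lambda>i t. Jint (H i) t)"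
  define \<psi>' where "\<psi>' = (\<lambda>i j t. \<psi> i j t + \<Delta> i j t)"
  define y' where "y' = (\<lambda>i t. y i t + dy i t)"
  define z' where "z' = (\<lambda>j t. z j t - d j t)"
  define w' where "w' = (\<lambda>i t. w i t + f i t + \<eta> i t)"

  have tau_pos: "0 < \<tau>" using mmin by (simp add: \<tau>_def)
  have Fs_nn: "0 \<le> Fs" unfolding Fs_def
    by (rule sum_nonneg) (use sup_norm_ge[OF freg, of _ 0] Tpos in force)
  have c_nn: "0 \<le> c" using Fs_nn mmax_pos by (simp add: c_def)
  have ctau: "mmin * (c * \<tau>) = mmax * Fs" using mmin by (simp add: c_def \<tau>_def)

  have fle: "f i t \<le> sup_norm T (f i)" if "i \<in> ?I" "t \<in> {0..T}" for i t
    using sup_norm_ge[OF freg[OF that(1)] that(2)] by linarith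
  have sumf_le: "(\<Sum>i\<in>?I. f i t) \<le> Fs" if "t \<in> {0..T}" for t
    unfolding Fs_def by (rule sum_mono) (use fle that in auto)
  have f0FL: "f i0 t + FL t = (\<Sum>i\<in>?I. f i t)" for t
    unfolding FL_def I_split(1) using I_split(2) finI' by simp
  have fi_le: "f i t \<le> Fs" if "i \<in> ?I" "t \<in> {0..T}" for i t
  proof -
    have "f i t \<le> (\<Sum>i\<in>?I. f i t)" by (rule member_le_sum) (use that fnn finI in auto)
    then show ?thesis using sumf_le[OF that(2)] by linarith
  qed
  have FL_nn: "0 \<le> FL t" if "t \<in> {0..T}" for t
    unfolding FL_def by (rule sum_nonneg) (use fnn I'I that in auto)
  have FL_le: "FL t \<le> Fs" if "t \<in> {0..T}" for t
    using f0FL[of t] sumf_le[OF that] fnn[OF i0I that] by linarith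
  have Z_nn: "0 \<le> Z t" if "t \<in> {0..T}" for t
    unfolding Z_def by (rule sum_nonneg) (use S3z that in auto)
  have P_nn: "0 \<le> P t" if "t \<in> {0..T}" for t
    using that c_nn tau_pos by (simp add: P_def)
  have P_le: "P t \<le> c * \<tau>" for t
    using c_nn by (simp add: P_def mult_left_mono)
  have P_leT: "P t \<le> c * T" if "t \<in> {0..T}" for t
    using c_nn that by (simp add: P_def mult_left_mono min.coboundedI1)
  have P_big: "P t = c * \<tau>" if "\<not> t \<le> \<tau>" for t
    using that by (simp add: P_def)
  have AF: "0 \<le> X t" "X t \<le> FL t" "0 \<le> D t" "D t \<le> Z t" "D t \<le> B t"
    "0 \<le> f i0 t + P t + X t - D t" "X t > 0 \<Longrightarrow> P t + X t \<le> D t" "D t < Z t \<Longrightarrow> D t = B t"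
    if "t \<in> {0..T}" for t
    using alloc_facts[OF fnn[OF i0I that] FL_nn[OF that] P_nn[OF that] Z_nn[OF that]]
    unfolding X_def D_def B_def by auto
  have ratX: "0 \<le> X t / FL t" "X t / FL t \<le> 1" if "t \<in> {0..T}" for t
    using AF(1,2)[OF that] FL_nn[OF that] by (auto simp: divide_le_eq_1)
  have ratD: "0 \<le> D t / Z t" "D t / Z t \<le> 1" if "t \<in> {0..T}" for t
    using AF(3,4)[OF that] Z_nn[OF that] by (auto simp: divide_le_eq_1)
  have x_nn: "0 \<le> x i t" if "i \<in> ?I" "t \<in> {0..T}" for i t
    unfolding x_def by (rule mult_nonneg_nonneg) (use ratX[OF that(2)] fnn[OF that] in auto)
  have x_le: "x i t \<le> f i t" if "i \<in> ?I" "t \<in> {0..T}" for i t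
    unfolding x_def by (rule mult_left_le_one_le) (use ratX[OF that(2)] fnn[OF that] in auto)
  have sum_x: "(\<Sum>i\<in>I'. x i t) = X t" if "t \<in> {0..T}" for t
  proof (cases "FL t = 0")
    case True
    then have "X t = 0" using AF(1,2)[OF that] by linarith
    then show ?thesis by (simp add: x_def)
  next
    case False
    have "(\<Sum>i\<in>I'. x i t) = (X t / FL t) * (\<Sum>i\<in>I'. f i t)" unfolding x_def by (rule sum_distrib_left[symmetric])
    also have "\<dots> = (X t / FL t) * FL t" unfolding FL_def by (rule refl)
    also have "\<dots> = X t" using False by simp
    finally show ?thesis .
  qed
  have d_nn: "0 \<le> d j t" if "j \<in> ?J" "t \<in> {0..T}" for j t
    unfolding d_def by (rule mult_nonneg_nonneg) (use ratD[OF that(2)] S3z[OF that(2,1)] in auto)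
  have d_le: "d j t \<le> z j t" if "j \<in> ?J" "t \<in> {0..T}" for j t
    unfolding d_def by (rule mult_right_le_one_le) (use ratD[OF that(2)] S3z[OF that(2,1)] in auto)
  have sum_d: "(\<Sum>j\<in>?J. d j t) = D t" if "t \<in> {0..T}" for t
  proof (cases "Z t = 0")
    case True
    then have "D t = 0" using AF(3,4)[OF that] by linarith
    then show ?thesis by (simp add: d_def)
  next
    case False
    have "(\<Sum>j\<in>?J. d j t) = (\<Sum>j\<in>?J. z j t) * (D t / Z t)" unfolding d_def by (rule sum_distrib_right[symmetric])
    also have "\<dots> = Z t * (D t / Z t)" unfolding Z_def by (rule refl)
    also have "\<dots> = D t" using False by simp
    finally show ?thesis .
  qed
  have L_nn: "0 \<le> L j t" if "t \<in> {0..T}" for j t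
    unfolding L_def by (rule sum_nonneg) (use x_nn I'I that in auto)
  have sum_L: "(\<Sum>j\<in>?J. L j t) = X t" if "t \<in> {0..T}" for t
  proof -
    have "(\<Sum>j\<in>?J. L j t) = (\<Sum>i\<in>I'. x i t)" unfolding L_def
      by (rule sum.group) (use finI' finJ nb I'I in auto)
    then show ?thesis using sum_x[OF that] by simp
  qed
  have row0: "(\<Sum>j\<in>?J. \<Delta> i0 j t) = D t - X t" if "t \<in> {0..T}" for t
  proof -
    have "(\<Sum>j\<in>?J. \<Delta> i0 j t) = (\<Sum>j\<in>?J. d j t) - (\<Sum>j\<in>?J. L j t)"
      unfolding \<Delta>_def by (simp add: sum_subtractf)
    then show ?thesis using sum_d[OF that] sum_L[OF that] by simp
  qed
  have rowL: "(\<Sum>j\<in>?J. \<Delta> i j t) = x i t" if "i \<in> I'" for i t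
  proof -
    have "i \<noteq> i0" "nb i \<in> ?J" using that I'I nb by auto
    then show ?thesis unfolding \<Delta>_def using finJ by (simp add: sum.delta)
  qed
  have row: "(\<Sum>j\<in>?J. \<Delta> i j t) = f i t + (if i = i0 then P t else 0) - dy i t"
    if "i \<in> ?I" "t \<in> {0..T}" for i t
  proof (cases "i = i0")
    case True then show ?thesis using row0[OF that(2)] by (simp add: dy_def)
  next
    case False
    then have "i \<in> I'" using that by (simp add: I'_def)
    then show ?thesis using rowL False by (simp add: dy_def)
  qed
  have colL: "(\<Sum>i\<in>I'. \<Delta> i j t) = L j t" for j t
  proof -
    have "(\<Sum>i\<in>I'. \<Delta> i j t) = (\<Sum>i\<in>I'. if nb i = j then x i t else 0)"
      by (rule sum.cong) (auto simp: \<Delta>_def I'_def)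
    also have "\<dots> = L j t" unfolding L_def using finI' by (simp add: sum.inter_filter)
    finally show ?thesis .
  qed
  have col: "(\<Sum>i\<in>?I. \<Delta> i j t) = d j t" for j t
    unfolding I_split(1) using I_split(2) finI' colL[of j t] by (simp add: \<Delta>_def)
  have Delta_off: "\<Delta> i j t = 0" if "i \<in> ?I" "j \<in> ?J" "(i, j) \<notin> E" for i j t
    using that i0E nb unfolding \<Delta>_def by auto
  have dy_nn: "0 \<le> dy i t" if "i \<in> ?I" "t \<in> {0..T}" for i t
    using AF(6)[OF that(2)] x_le[OF that] by (simp add: dy_def)
  have sum_dy: "(\<Sum>i\<in>?I. dy i t) = B t - D t" if "t \<in> {0..T}" for t
  proof -
    have "(\<Sum>i\<in>I'. dy i t) = (\<Sum>i\<in>I'. f i t - x i t)"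
      by (rule sum.cong) (auto simp: dy_def I'_def)
    also have "\<dots> = FL t - X t" using sum_x[OF that] by (simp add: sum_subtractf FL_def)
    finally have "(\<Sum>i\<in>I'. dy i t) = FL t - X t" .
    then show ?thesis unfolding I_split(1) using I_split(2) finI' by (simp add: dy_def B_def)
  qed
  have Hleaf: "H i s = \<mu> i (nb i) * x i s + \<theta> i * (f i s - x i s)" if "i \<in> I'" for i s
  proof -
    have "i \<noteq> i0" "nb i \<in> ?J" using that I'I nb by auto
    then show ?thesis unfolding H_def \<Delta>_def dy_def using finJ
      by (simp add: sum.delta if_distrib[of "\<lambda>v. \<mu> i _ * v"] cong: if_cong)
  qed
  have Hi0: "H i0 s = k s + ((\<Sum>j\<in>?J. \<mu> i0 j * d j s) - (\<Sum>j\<in>?J. \<mu> i0 j * L j s)) + \<theta> i0 * dy i0 s" for s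
    unfolding H_def \<Delta>_def by (simp add: right_diff_distrib sum_subtractf)
  have md_lo: "mmin * D s \<le> (\<Sum>j\<in>?J. \<mu> i0 j * d j s)" if "s \<in> {0..T}" for s
  proof -
    have "mmin * D s = (\<Sum>j\<in>?J. mmin * d j s)" using sum_d[OF that] by (simp add: sum_distrib_left[symmetric])
    also have "\<dots> \<le> (\<Sum>j\<in>?J. \<mu> i0 j * d j s)"
      by (rule sum_mono, rule mult_right_mono) (use mmin d_nn that in auto)
    finally show ?thesis .
  qed
  have md_hi: "(\<Sum>j\<in>?J. \<mu> i0 j * d j s) \<le> mmax * D s" if "s \<in> {0..T}" for s
  proof -
    have "(\<Sum>j\<in>?J. \<mu> i0 j * d j s) \<le> (\<Sum>j\<in>?J. mmax * d j s)"
      by (rule sum_mono, rule mult_right_mono) (use mmax d_nn that in auto)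
    also have "\<dots> = mmax * D s" using sum_d[OF that] by (simp add: sum_distrib_left[symmetric])
    finally show ?thesis .
  qed
  have mL_lo: "0 \<le> (\<Sum>j\<in>?J. \<mu> i0 j * L j s)" if "s \<in> {0..T}" for s
    by (rule sum_nonneg) (use mu_nn L_nn that in auto)
  have mL_hi: "(\<Sum>j\<in>?J. \<mu> i0 j * L j s) \<le> mmax * X s" if "s \<in> {0..T}" for s
  proof -
    have "(\<Sum>j\<in>?J. \<mu> i0 j * L j s) \<le> (\<Sum>j\<in>?J. mmax * L j s)"
      by (rule sum_mono, rule mult_right_mono) (use mmax L_nn that in auto)
    also have "\<dots> = mmax * X s" using sum_L[OF that] by (simp add: sum_distrib_left[symmetric])
    finally show ?thesis .
  qed
  have H_nn: "0 \<le> H i s" if "i \<in> ?I" "s \<in> {0..T}" for i s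
  proof (cases "i = i0")
    case False
    then have iI': "i \<in> I'" using that by (simp add: I'_def)
    have "0 \<le> \<mu> i (nb i) * x i s" using mu_nn x_nn[OF that] by simp
    moreover have "0 \<le> \<theta> i * (f i s - x i s)" using theta_nn[OF that(1)] x_le[OF that] by simp
    ultimately show ?thesis using Hleaf[OF iI'] by simp
  next
    case True
    have a: "0 \<le> \<theta> i0 * dy i0 s" using th0 dy_nn[OF i0I that(2)] by simp
    have b: "0 \<le> mmin * D s" using mmin AF(3)[OF that(2)] by simp
    have XF: "mmax * X s \<le> mmax * Fs"
      using AF(2)[OF that(2)] FL_le[OF that(2)] mmax_pos by (intro mult_left_mono) auto
    have "(\<Sum>j\<in>?J. \<mu> i0 j * L j s) \<le> k s + (\<Sum>j\<in>?J. \<mu> i0 j * d j s)"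
    proof (cases "s \<le> \<tau>")
      case True
      then have "k s = mmax * Fs" by (simp add: k_def c_def)
      then show ?thesis using mL_hi[OF that(2)] XF md_lo[OF that(2)] b by linarith
    next
      case False
      then have k0: "k s = 0" by (simp add: k_def)
      show ?thesis
      proof (cases "X s > 0")
        case True
        have "P s \<le> D s" using AF(7)[OF that(2) True] AF(1)[OF that(2)] by linarith
        then have "mmin * P s \<le> mmin * D s" using mmin by (intro mult_left_mono) auto
        moreover have "mmin * P s = mmax * Fs" using P_big[OF False] ctau by simp
        ultimately show ?thesis using mL_hi[OF that(2)] XF md_lo[OF that(2)] k0 by linarith
      next
        case False
        then have "X s = 0" using AF(1)[OF that(2)] by linarith
        then show ?thesis using mL_hi[OF that(2)] md_lo[OF that(2)] b k0 by simp
      qed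
    qed
    then show ?thesis using Hi0[of s] a True by simp
  qed
  define A0 where "A0 = mmax + (mmax + \<theta> i0) * (1 + mmax / mmin)"
  define A1 where "A1 = (\<Sum>i\<in>?I. \<Sum>j\<in>?J. \<mu> i j) + (\<Sum>i\<in>?I. \<theta> i)"
  have m5_eq: "m5 = A0 + A1" unfolding m5_def A0_def A1_def by simp
  have A0_nn: "0 \<le> A0" unfolding A0_def using mmax_pos mmin th0 by (simp add: add_nonneg_nonneg)
  have A1_nn: "0 \<le> A1" unfolding A1_def
    by (intro add_nonneg_nonneg sum_nonneg) (use mu_nn theta_nn in auto)
  have H_le: "H i s \<le> m5 * Fs" if "i \<in> ?I" "s \<in> {0..T}" for i s
  proof -
    have "H i s \<le> A0 * Fs \<or> H i s \<le> A1 * Fs"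
    proof (cases "i = i0")
      case False
      then have iI': "i \<in> I'" using that by (simp add: I'_def)
      have mu_le: "\<mu> i (nb i) \<le> (\<Sum>i\<in>?I. \<Sum>j\<in>?J. \<mu> i j)"
      proof -
        have "\<mu> i (nb i) \<le> (\<Sum>j\<in>?J. \<mu> i j)" by (rule member_le_sum) (use nb[OF that(1)] mu_nn finJ in auto)
        also have "\<dots> \<le> (\<Sum>i\<in>?I. \<Sum>j\<in>?J. \<mu> i j)"
          by (rule member_le_sum[where f="\<lambda>i. \<Sum>j\<in>?J. \<mu> i j"]) (use that finI mu_nn in \<open>auto intro: sum_nonneg\<close>)
        finally show ?thesis .
      qed
      have th_le: "\<theta> i \<le> (\<Sum>i\<in>?I. \<theta> i)" by (rule member_le_sum) (use that finI theta_nn in auto)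
      have "H i s \<le> \<mu> i (nb i) * f i s + \<theta> i * f i s"
        unfolding Hleaf[OF iI'] using x_le[OF that] x_nn[OF that] mu_nn theta_nn[OF that(1)]
        by (intro add_mono mult_left_mono) auto
      also have "\<dots> = (\<mu> i (nb i) + \<theta> i) * f i s" by (simp add: algebra_simps)
      also have "\<dots> \<le> A1 * Fs"
        by (rule mult_mono) (use mu_le th_le fi_le[OF that] fnn[OF that] mu_nn theta_nn[OF that(1)] A1_nn in \<open>auto simp: A1_def\<close>)
      finally show ?thesis by blast
    next
      case True
      have B_le: "B s \<le> Fs * (1 + mmax / mmin)"
      proof -
        have "B s = (\<Sum>i\<in>?I. f i s) + P s" using f0FL[of s] by (simp add: B_def)
        also have "\<dots> \<le> Fs + c * \<tau>" using sumf_le[OF that(2)] P_le[of s] by linarith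
        also have "\<dots> = Fs * (1 + mmax / mmin)" by (simp add: c_def \<tau>_def algebra_simps)
        finally show ?thesis .
      qed
      have k_le: "k s \<le> mmax * Fs" using c_nn by (simp add: k_def c_def)
      have D_le: "mmax * D s \<le> mmax * (Fs * (1 + mmax / mmin))"
        using AF(5)[OF that(2)] B_le mmax_pos by (intro mult_left_mono) auto
      have dy_le: "\<theta> i0 * dy i0 s \<le> \<theta> i0 * (Fs * (1 + mmax / mmin))"
      proof -
        have "dy i0 s \<le> B s" using AF(2,3)[OF that(2)] by (simp add: dy_def B_def)
        then show ?thesis using B_le th0 by (intro mult_left_mono) auto
      qed
      have "H i s \<le> mmax * Fs + mmax * (Fs * (1 + mmax / mmin)) + \<theta> i0 * (Fs * (1 + mmax / mmin))"
        unfolding True using Hi0[of s] k_le md_hi[OF that(2)] mL_lo[OF that(2)] D_le dy_le by linarith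
      also have "\<dots> = A0 * Fs" by (simp add: A0_def algebra_simps)
      finally show ?thesis by blast
    qed
    moreover have "A0 * Fs \<le> m5 * Fs" "A1 * Fs \<le> m5 * Fs"
      using A0_nn A1_nn Fs_nn unfolding m5_eq by (auto intro: mult_right_mono)
    ultimately show ?thesis by linarith
  qed
  have kreg: "regular_on T k"
    by (rule reg_intro[where M="\<bar>c\<bar>"]) (use meas_step in \<open>auto simp: k_def\<close>)
  have Preg: "regular_on T P"
  proof (rule reg_intro[where M="c * T"])
    show "P \<in> borel_measurable (restrict_space lborel {0..T})" unfolding P_def by (rule meas_P)
  qed (use P_nn P_leT in auto)
  have FLreg: "regular_on T FL" unfolding FL_def by (rule reg_sum) (use finI' freg I'I in auto)
  have Zreg: "regular_on T Z" unfolding Z_def by (rule reg_sum) (use finJ zreg in auto)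
  have f0reg: "regular_on T (f i0)" using freg i0I by blast
  have Breg: "regular_on T B" unfolding B_def by (intro reg_add f0reg Preg FLreg)
  have Dreg: "regular_on T D" unfolding D_def by (intro reg_min Zreg Breg)
  have Xreg: "regular_on T X" unfolding X_def
    by (intro reg_min reg_max reg_diff FLreg Zreg f0reg Preg reg_const)
  have xreg: "regular_on T (x i)" if "i \<in> ?I" for i
  proof (rule reg_dom[OF _ freg[OF that]])
    show "x i \<in> borel_measurable (restrict_space lborel {0..T})" unfolding x_def
      by (intro borel_measurable_times borel_measurable_divide reg_measI Xreg FLreg freg that)
    show "\<bar>x i t\<bar> \<le> \<bar>f i t\<bar>" if "t \<in> {0..T}" for t
      using x_nn[OF \<open>i \<in> ?I\<close> that] x_le[OF \<open>i \<in> ?I\<close> that] by simp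
  qed
  have dreg: "regular_on T (d j)" if "j \<in> ?J" for j
  proof (rule reg_dom[OF _ zreg[OF that]])
    show "d j \<in> borel_measurable (restrict_space lborel {0..T})" unfolding d_def
      by (intro borel_measurable_times borel_measurable_divide reg_measI Dreg Zreg zreg that)
    show "\<bar>d j t\<bar> \<le> \<bar>z j t\<bar>" if "t \<in> {0..T}" for t
      using d_nn[OF \<open>j \<in> ?J\<close> that] d_le[OF \<open>j \<in> ?J\<close> that] by simp
  qed
  have Lreg: "regular_on T (L j)" for j
    unfolding L_def by (rule reg_sum) (use finI' xreg I'I in auto)
  have Dlreg: "regular_on T (\<Delta> i j)" if "i \<in> ?I" "j \<in> ?J" for i j
  proof (cases "i = i0")
    case True
    then have "\<Delta> i j = (\<lambda>t. d j t - L j t)" by (simp add: \<Delta>_def fun_eq_iff)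
    then show ?thesis using reg_diff[OF dreg[OF that(2)] Lreg] by simp
  next
    case False
    show ?thesis
    proof (cases "j = nb i")
      case True
      then have "\<Delta> i j = x i" using False by (simp add: \<Delta>_def fun_eq_iff)
      then show ?thesis using xreg[OF that(1)] by simp
    next
      case F2: False
      then have "\<Delta> i j = (\<lambda>t. 0)" using False by (simp add: \<Delta>_def fun_eq_iff)
      then show ?thesis using reg_const by simp
    qed
  qed
  have dyreg: "regular_on T (dy i)" if "i \<in> ?I" for i
  proof (cases "i = i0")
    case True
    then have "dy i = (\<lambda>t. f i0 t + P t + X t - D t)" by (simp add: dy_def fun_eq_iff)
    then show ?thesis using reg_diff[OF reg_add[OF reg_add[OF f0reg Preg] Xreg] Dreg] by simp
  next
    case False
    then have "dy i = (\<lambda>t. f i t - x i t)" by (simp add: dy_def fun_eq_iff)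
    then show ?thesis using reg_diff[OF freg[OF that] xreg[OF that]] by simp
  qed
  have H1reg: "regular_on T (\<lambda>s. if i = i0 then k s else 0)" for i
    by (cases "i = i0") (use kreg reg_const in auto)
  have H2reg: "regular_on T (\<lambda>s. \<Sum>j\<in>?J. \<mu> i j * \<Delta> i j s)" if "i \<in> ?I" for i
    by (rule reg_sum) (use finJ Dlreg[OF that] reg_mult[OF reg_const] in auto)
  have H3reg: "regular_on T (\<lambda>s. \<theta> i * dy i s)" if "i \<in> ?I" for i
    using reg_mult[OF reg_const dyreg[OF that]] by simp
  have Hreg: "regular_on T (H i)" if "i \<in> ?I" for i
    unfolding H_def by (intro reg_add H1reg H2reg H3reg that)
  have m5Fs: "0 \<le> m5 * Fs" using A0_nn A1_nn Fs_nn m5_eq by simp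
  have eta_nn: "0 \<le> \<eta> i t" if "i \<in> ?I" "t \<in> {0..T}" for i t
    unfolding \<eta>_def by (rule Jint_nonneg) (use reg_int[OF Hreg[OF that(1)]] H_nn that in auto)
  have eta_le: "\<eta> i t \<le> m5 * T * Fs" if "i \<in> ?I" "t \<in> {0..T}" for i t
    using Jint_le[OF Hreg[OF that(1)] that(2) H_le[OF that(1)] m5Fs] by (simp add: \<eta>_def mult_ac)
  have eta_cont: "continuous_on {0..T} (\<eta> i)" if "i \<in> ?I" for i
    unfolding \<eta>_def using Jint_cont[OF Hreg[OF that]] by simp
  have eta_mono: "mono_on {0..T} (\<eta> i)" if "i \<in> ?I" for i
    unfolding \<eta>_def using Jint_mono[OF Hreg[OF that] H_nn[OF that]] by simp
  have eta_reg: "regular_on T (\<eta> i)" if "i \<in> ?I" for i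
    by (rule reg_cont[OF eta_cont[OF that], where M="m5 * T * Fs"]) (use eta_nn eta_le that in force)
  have JH: "\<eta> i t = (if i = i0 then P t else 0) + (\<Sum>j\<in>?J. \<mu> i j * Jint (\<Delta> i j) t) + \<theta> i * Jint (dy i) t"
    if "i \<in> ?I" "t \<in> {0..T}" for i t
  proof -
    have tT: "t \<le> T" "0 \<le> t" using that by auto
    have i1: "(\<lambda>s. if i = i0 then k s else 0) integrable_on {0..t}" by (rule reg_int[OF H1reg tT(1)])
    have i2: "(\<lambda>s. \<Sum>j\<in>?J. \<mu> i j * \<Delta> i j s) integrable_on {0..t}" by (rule reg_int[OF H2reg[OF that(1)] tT(1)])
    have i3: "(\<lambda>s. \<theta> i * dy i s) integrable_on {0..t}" by (rule reg_int[OF H3reg[OF that(1)] tT(1)])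
    have "\<eta> i t = Jint (\<lambda>s. ((if i = i0 then k s else 0) + (\<Sum>j\<in>?J. \<mu> i j * \<Delta> i j s)) + \<theta> i * dy i s) t"
      by (simp add: \<eta>_def H_def)
    also have "\<dots> = Jint (\<lambda>s. (if i = i0 then k s else 0) + (\<Sum>j\<in>?J. \<mu> i j * \<Delta> i j s)) t + Jint (\<lambda>s. \<theta> i * dy i s) t"
      by (rule Jint_add[OF integrable_add[OF i1 i2] i3])
    also have "\<dots> = Jint (\<lambda>s. if i = i0 then k s else 0) t + Jint (\<lambda>s. \<Sum>j\<in>?J. \<mu> i j * \<Delta> i j s) t + \<theta> i * Jint (dy i) t"
      by (simp only: Jint_add[OF i1 i2] Jint_cmult)
    also have "Jint (\<lambda>s. \<Sum>j\<in>?J. \<mu> i j * \<Delta> i j s) t = (\<Sum>j\<in>?J. \<mu> i j * Jint (\<Delta> i j) t)"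
    proof -
      have "Jint (\<lambda>s. \<Sum>j\<in>?J. \<mu> i j * \<Delta> i j s) t = (\<Sum>j\<in>?J. Jint (\<lambda>s. \<mu> i j * \<Delta> i j s) t)"
        by (rule Jint_sum[OF finJ]) (rule reg_int[OF reg_mult[OF reg_const Dlreg[OF that(1)]] tT(1)])
      then show ?thesis by (simp add: Jint_cmult)
    qed
    also have "Jint (\<lambda>s. if i = i0 then k s else 0) t = (if i = i0 then P t else 0)"
    proof (cases "i = i0")
      case True
      then show ?thesis using Jint_step[OF tau_pos tT(2), of c] by (simp add: k_def P_def)
    next
      case False
      then show ?thesis by (simp add: Jint_def)
    qed
    finally show ?thesis .
  qed
  have newS1: "(\<Sum>j\<in>?J. \<psi>' i j t + \<mu> i j * Jint (\<psi>' i j) t) = w' i t - y' i t - \<theta> i * Jint (y' i) t"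
    if "i \<in> ?I" "t \<in> {0..T}" for i t
  proof -
    have tT: "t \<le> T" using that by auto
    have Jpsi: "Jint (\<psi>' i j) t = Jint (\<psi> i j) t + Jint (\<Delta> i j) t" if "j \<in> ?J" for j
      unfolding \<psi>'_def by (rule Jint_add) (use reg_int[OF psireg[OF \<open>i \<in> ?I\<close> that] tT] reg_int[OF Dlreg[OF \<open>i \<in> ?I\<close> that] tT] in auto)
    have Jy: "\<theta> i * Jint (y' i) t = \<theta> i * Jint (y i) t + \<theta> i * Jint (dy i) t"
      unfolding y'_def Jint_add[OF reg_int[OF yreg[OF that(1)] tT] reg_int[OF dyreg[OF that(1)] tT]] by (simp add: algebra_simps)
    have "(\<Sum>j\<in>?J. \<psi>' i j t + \<mu> i j * Jint (\<psi>' i j) t)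
        = (\<Sum>j\<in>?J. (\<psi> i j t + \<mu> i j * Jint (\<psi> i j) t) + \<Delta> i j t + \<mu> i j * Jint (\<Delta> i j) t)"
    proof (rule sum.cong)
      fix j assume j: "j \<in> ?J"
      have pt: "\<psi>' i j t = \<psi> i j t + \<Delta> i j t" by (simp add: \<psi>'_def)
      show "\<psi>' i j t + \<mu> i j * Jint (\<psi>' i j) t = (\<psi> i j t + \<mu> i j * Jint (\<psi> i j) t) + \<Delta> i j t + \<mu> i j * Jint (\<Delta> i j) t"
        unfolding pt Jpsi[OF j] by (simp add: algebra_simps)
    qed simp
    also have "\<dots> = (\<Sum>j\<in>?J. \<psi> i j t + \<mu> i j * Jint (\<psi> i j) t) + (\<Sum>j\<in>?J. \<Delta> i j t) + (\<Sum>j\<in>?J. \<mu> i j * Jint (\<Delta> i j) t)"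
      by (simp add: sum.distrib)
    finally have L: "(\<Sum>j\<in>?J. \<psi>' i j t + \<mu> i j * Jint (\<psi>' i j) t)
        = (\<Sum>j\<in>?J. \<psi> i j t + \<mu> i j * Jint (\<psi> i j) t) + (\<Sum>j\<in>?J. \<Delta> i j t) + (\<Sum>j\<in>?J. \<mu> i j * Jint (\<Delta> i j) t)" .
    show ?thesis using L Jy S1[OF that(2,1)] row[OF that] JH[OF that]
      by (simp add: w'_def y'_def)
  qed
  have newS2: "(\<Sum>i\<in>?I. \<psi>' i j t) = - z' j t" if "j \<in> ?J" "t \<in> {0..T}" for j t
    using S2[OF that(2,1)] col[of j t] by (simp add: \<psi>'_def sum.distrib z'_def)
  have sum_y': "(\<Sum>i\<in>?I. y' i t) = (\<Sum>i\<in>?I. y i t) + (B t - D t)" if "t \<in> {0..T}" for t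
    using sum_dy[OF that] by (simp add: y'_def sum.distrib)
  have sum_z': "(\<Sum>j\<in>?J. z' j t) = Z t - D t" if "t \<in> {0..T}" for t
    using sum_d[OF that] by (simp add: z'_def sum_subtractf Z_def)
  have sumy_nn: "0 \<le> (\<Sum>i\<in>?I. y i t)" if "t \<in> {0..T}" for t
    by (rule sum_nonneg) (use S3y that in auto)
  have newS4: "min (\<Sum>i\<in>?I. y' i t) (\<Sum>j\<in>?J. z' j t) = 0" if "t \<in> {0..T}" for t
  proof (cases "D t < Z t")
    case True
    then have "D t = B t" using AF(8)[OF that] by blast
    moreover have "(\<Sum>i\<in>?I. y i t) = 0"
    proof -
      have "Z t > 0" using True AF(3)[OF that] by linarith
      then show ?thesis using S4[OF that] sumy_nn[OF that] unfolding Z_def by (auto simp: min_def split: if_splits)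
    qed
    ultimately show ?thesis using sum_y'[OF that] sum_z'[OF that] True by simp
  next
    case False
    then have "D t = Z t" using AF(4)[OF that] by linarith
    then show ?thesis using sum_y'[OF that] sum_z'[OF that] sumy_nn[OF that] AF(5)[OF that] by simp
  qed
  have r1: "regular_on T (\<psi>' i j)" if "i \<in> ?I" "j \<in> ?J" for i j
    unfolding \<psi>'_def by (rule reg_add[OF psireg Dlreg]) (use that in auto)
  have r2: "regular_on T (y' i)" if "i \<in> ?I" for i
    unfolding y'_def by (rule reg_add[OF yreg dyreg]) (use that in auto)
  have r3: "regular_on T (w' i)" if "i \<in> ?I" for i
    unfolding w'_def by (rule reg_add[OF reg_add[OF wreg freg] eta_reg]) (use that in auto)
  have r4: "regular_on T (z' j)" if "j \<in> ?J" for j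
    unfolding z'_def by (rule reg_diff[OF zreg dreg]) (use that in auto)
  have pw: "(\<forall>i\<in>?I. \<forall>j\<in>?J. (i, j) \<notin> E \<longrightarrow> \<psi>' i j t = 0) \<and>
        (\<forall>i\<in>?I. (\<Sum>j\<in>?J. \<psi>' i j t + \<mu> i j * Jint (\<psi>' i j) t) = w' i t - y' i t - \<theta> i * Jint (y' i) t) \<and>
        (\<forall>j\<in>?J. (\<Sum>i\<in>?I. \<psi>' i j t) = - z' j t) \<and>
        (\<forall>i\<in>?I. 0 \<le> y' i t) \<and> (\<forall>j\<in>?J. 0 \<le> z' j t) \<and>
        min (\<Sum>i\<in>?I. y' i t) (\<Sum>j\<in>?J. z' j t) = 0" if t: "t \<in> {0..T}" for t
  proof (intro conjI)
    show "\<forall>i\<in>?I. \<forall>j\<in>?J. (i, j) \<notin> E \<longrightarrow> \<psi>' i j t = 0"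
      using S0[OF t] Delta_off by (simp add: \<psi>'_def)
    show "\<forall>i\<in>?I. (\<Sum>j\<in>?J. \<psi>' i j t + \<mu> i j * Jint (\<psi>' i j) t) = w' i t - y' i t - \<theta> i * Jint (y' i) t"
      using newS1 t by blast
    show "\<forall>j\<in>?J. (\<Sum>i\<in>?I. \<psi>' i j t) = - z' j t" using newS2 t by blast
    show "\<forall>i\<in>?I. 0 \<le> y' i t" using S3y[OF t] dy_nn t by (simp add: y'_def add_nonneg_nonneg)
    show "\<forall>j\<in>?J. 0 \<le> z' j t" using d_le t by (simp add: z'_def)
    show "min (\<Sum>i\<in>?I. y' i t) (\<Sum>j\<in>?J. z' j t) = 0" by (rule newS4[OF t])
  qed
  have adm': "admissible nI nJ E \<mu> \<theta> T \<psi>' y' z' w'"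
    unfolding admissible_def using r1 r2 r3 r4 pw by blast
  show ?thesis
  proof (intro exI conjI)
    show "admissible nI nJ E \<mu> \<theta> T \<psi>' y' z' w'" by (rule adm')
    show "\<forall>t\<in>{0..T}. (\<Sum>i\<in>?I. y' i t) \<ge> (\<Sum>i\<in>?I. y i t)"
      using sum_y' AF(5) by (simp add: B_def)
    show "\<forall>t\<in>{0..T}. (\<Sum>j\<in>?J. z' j t) \<le> (\<Sum>j\<in>?J. z j t)"
      using sum_z' AF(3) by (simp add: Z_def)
    show "\<forall>i\<in>?I. \<forall>t\<in>{0..T}. w' i t = w i t + f i t + \<eta> i t" by (simp add: w'_def)
    show "\<forall>i\<in>?I. mono_on {0..T} (\<eta> i) \<and> continuous_on {0..T} (\<eta> i) \<and>
           (\<forall>t\<in>{0..T}. 0 \<le> \<eta> i t \<and> \<eta> i t \<le> m5 * T * (\<Sum>i'\<in>?I. sup_norm T (f i')))"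
      using eta_mono eta_cont eta_nn eta_le by (simp add: Fs_def)
  qed
qed



theorem lemma2:
  fixes nI nJ :: nat and E :: "(nat \<times> nat) set"
    and \<mu> :: "nat \<Rightarrow> nat \<Rightarrow> real" and \<theta> :: "nat \<Rightarrow> real"
  assumes E_sub: "E \<subseteq> Iset nI \<times> Jset nI nJ"
    and mu_pos: "\<And>i j. (i, j) \<in> E \<Longrightarrow> \<mu> i j > 0"
    and mu_zero: "\<And>i j. (i, j) \<notin> E \<Longrightarrow> \<mu> i j = 0"
    and theta_nn: "\<And>i. i \<in> Iset nI \<Longrightarrow> \<theta> i \<ge> 0"
    and tree: "is_tree (Iset nI \<union> Jset nI nJ) E"
    and diam: "diameter (Iset nI \<union> Jset nI nJ) E = 3"
  shows "\<exists>m5::real. \<forall>T::real. \<forall>\<psi> y z w (f :: nat \<Rightarrow> real \<Rightarrow> real).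
     T > 0 \<longrightarrow> admissible nI nJ E \<mu> \<theta> T \<psi> y z w \<longrightarrow>
     (\<forall>i\<in>Iset nI. regular_on T (f i) \<and> (\<forall>t\<in>{0..T}. 0 \<le> f i t)) \<longrightarrow>
     (\<exists>\<psi>' y' z' w' \<eta>.
        admissible nI nJ E \<mu> \<theta> T \<psi>' y' z' w' \<and>
        (\<forall>t\<in>{0..T}. (\<Sum>i\<in>Iset nI. y' i t) \<ge> (\<Sum>i\<in>Iset nI. y i t)) \<and>
        (\<forall>t\<in>{0..T}. (\<Sum>j\<in>Jset nI nJ. z' j t) \<le> (\<Sum>j\<in>Jset nI nJ. z j t)) \<and>
        (\<forall>i\<in>Iset nI. \<forall>t\<in>{0..T}. w' i t = w i t + f i t + \<eta> i t) \<and>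
        (\<forall>i\<in>Iset nI. mono_on {0..T} (\<eta> i) \<and> continuous_on {0..T} (\<eta> i) \<and>
           (\<forall>t\<in>{0..T}. 0 \<le> \<eta> i t \<and>
              \<eta> i t \<le> m5 * T * (\<Sum>i'\<in>Iset nI. sup_norm T (f i')))))"
proof -
  obtain i0 where i0: "i0 \<in> Iset nI" "\<forall>j\<in>Jset nI nJ. (i0, j) \<in> E"
    using double_star(1)[OF E_sub tree diam] by blast
  have Jne: "Jset nI nJ \<noteq> {}" using double_star(2)[OF E_sub tree diam] .
  have nbex: "\<forall>i\<in>Iset nI. \<exists>j\<in>Jset nI nJ. (i, j) \<in> E" using double_star(3)[OF E_sub tree diam] .
  define nb where "nb = (\<lambda>i. SOME j. j \<in> Jset nI nJ \<and> (i, j) \<in> E)"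
  have nb: "nb i \<in> Jset nI nJ \<and> (i, nb i) \<in> E" if "i \<in> Iset nI" for i
    unfolding nb_def by (rule someI_ex) (use nbex that in blast)
  define mmin where "mmin = Min ((\<lambda>j. \<mu> i0 j) ` Jset nI nJ)"
  define mmax where "mmax = Max ((\<lambda>j. \<mu> i0 j) ` Jset nI nJ)"
  have finJ: "finite ((\<lambda>j. \<mu> i0 j) ` Jset nI nJ)" by simp
  have neJ: "(\<lambda>j. \<mu> i0 j) ` Jset nI nJ \<noteq> {}" using Jne by simp
  have mmin_pos: "0 < mmin"
  proof -
    have "mmin \<in> (\<lambda>j. \<mu> i0 j) ` Jset nI nJ" unfolding mmin_def by (rule Min_in[OF finJ neJ])
    then show ?thesis using i0(2) mu_pos by auto
  qed
  have mmin_le: "mmin \<le> \<mu> i0 j" if "j \<in> Jset nI nJ" for j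
    unfolding mmin_def by (rule Min_le[OF finJ]) (use that in auto)
  have mmax_ge: "\<mu> i0 j \<le> mmax" if "j \<in> Jset nI nJ" for j
    unfolding mmax_def by (rule Max_ge[OF finJ]) (use that in auto)
  show ?thesis
  proof (rule exI, intro allI impI)
    fix T :: real and \<psi> y z w and f :: "nat \<Rightarrow> real \<Rightarrow> real"
    assume Tpos: "T > 0" and adm: "admissible nI nJ E \<mu> \<theta> T \<psi> y z w"
      and fc: "\<forall>i\<in>Iset nI. regular_on T (f i) \<and> (\<forall>t\<in>{0..T}. 0 \<le> f i t)"
    show "\<exists>\<psi>' y' z' w' \<eta>.
        admissible nI nJ E \<mu> \<theta> T \<psi>' y' z' w' \<and>
        (\<forall>t\<in>{0..T}. (\<Sum>i\<in>Iset nI. y' i t) \<ge> (\<Sum>i\<in>Iset nI. y i t)) \<and>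
        (\<forall>t\<in>{0..T}. (\<Sum>j\<in>Jset nI nJ. z' j t) \<le> (\<Sum>j\<in>Jset nI nJ. z j t)) \<and>
        (\<forall>i\<in>Iset nI. \<forall>t\<in>{0..T}. w' i t = w i t + f i t + \<eta> i t) \<and>
        (\<forall>i\<in>Iset nI. mono_on {0..T} (\<eta> i) \<and> continuous_on {0..T} (\<eta> i) \<and>
           (\<forall>t\<in>{0..T}. 0 \<le> \<eta> i t \<and>
              \<eta> i t \<le> ((mmax + (mmax + \<theta> i0) * (1 + mmax / mmin)) + ((\<Sum>i\<in>Iset nI. \<Sum>j\<in>Jset nI nJ. \<mu> i j) + (\<Sum>i\<in>Iset nI. \<theta> i))) * T * (\<Sum>i'\<in>Iset nI. sup_norm T (f i'))))"
      by (rule construction[OF E_sub mu_pos mu_zero theta_nn i0(1) _ nb mmin_pos mmin_le mmax_ge Jne Tpos adm fc])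
         (use i0(2) in auto)
  qed
qed

end
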